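(* Let $\Sigma$ be a driftless control-affine system on $\mathcal M$ with sub-Riemannian distance $d$. Let $x:[0,T]\to\mathcal M$ be a dynamically feasible trajectory and consider a partition $0=\tau_1<\tau_2<\dots<\tau_M=T$. Let $\rho>0$, $\beta\in(0,1)$ and $\alpha\in[0,1]$. Suppose $y_1,\dots,y_M\in\mathcal M$ satisfy (a) $y_m\in B(x(\tau_m),\rho)$ for all $m\in\{1,\dots,M\}$, and (b) more than a $(1-\alpha)$ fraction of the $y_m$ satisfy $y_m\in B(x(\tau_m),\beta\rho)$. Let $y^*$ be a trajectory sequentially connecting $y_1,\dots,y_M$ in which each segment from $y_m$ to $y_{m+1}$ has arc length $d(y_m,y_{m+1})$. Then $$c(y^* )\le c(x)+2M\rho(\beta+\alpha-\alpha\beta).$$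
   Context: A driftless control-affine system on $\mathcal M\subset\mathbb R^n$ is $\dot x(t)=\sum_{i=1}^m g_i(x(t))u_i(t)$ with $g_i$ smooth vector fields and controls $u(t)\in U$, $U\subset\mathbb R^m$ closed, bounded, symmetric about the origin, $0$ in the interior of its convex hull. A dynamically feasible trajectory is a solution $x:[0,T]\to\mathcal M$ for some control $u:[0,T]\to U$. The cost $c(x)=\int_0^T\|\dot x(t)\|dt$ is the Euclidean arc length. The sub-Riemannian distance $d(p,q)$ is the infimum of arc lengths of dynamically feasible trajectories connecting $p$ and $q$; it is a metric on $\mathcal M$ (by time-reversibility). $B(p,r)=\{q\in\mathcal M: d(p,q)\le r\}$. Thus $c(y^* )=\sum_{m=1}^{M-1}d(y_m,y_{m+1})$. *)

theory Defs
  imports "HOL-Analysis.Analysis" "HOL-Library.Extended_Real"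
begin

fun Ck :: "nat \<Rightarrow> 'a::euclidean_space set \<Rightarrow> ('a \<Rightarrow> 'b::real_normed_vector) \<Rightarrow> bool" where
  "Ck 0 S f = continuous_on S f"
| "Ck (Suc k) S f = (\<exists>f'. (\<forall>x\<in>S. (f has_derivative f' x) (at x)) \<and> (\<forall>v. Ck k S (\<lambda>x. f' x v)))"

definition smooth_on :: "'a::euclidean_space set \<Rightarrow> ('a \<Rightarrow> 'b::real_normed_vector) \<Rightarrow> bool" where
  "smooth_on S f \<longleftrightarrow> (\<forall>k. Ck k S f)"

text \<open>Driftless control-affine system on \<M> \<subseteq> R^n with vector fields g i (i ranging over
  the finite index type 'm, so m = CARD('m)) and control set U \<subseteq> R^m.\<close>
definition driftless_system ::
  "(real^'n) set \<Rightarrow> ('m::finite \<Rightarrow> real^'n \<Rightarrow> real^'n) \<Rightarrow> (real^'m) set \<Rightarrow> bool" where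
  "driftless_system \<M> g U \<longleftrightarrow>
     (\<exists>S. open S \<and> \<M> \<subseteq> S \<and> (\<forall>i. smooth_on S (g i))) \<and>
     closed U \<and> bounded U \<and> (\<forall>v\<in>U. - v \<in> U) \<and> 0 \<in> interior (convex hull U)"

text \<open>Dynamically feasible trajectory x on [0,T] with control u (Caratheodory solution:
  u measurable with values in U, x stays in \<M> and satisfies the integral equation).\<close>
definition feasible ::
  "(real^'n) set \<Rightarrow> ('m::finite \<Rightarrow> real^'n \<Rightarrow> real^'n) \<Rightarrow> (real^'m) set \<Rightarrow>
   (real \<Rightarrow> real^'n) \<Rightarrow> real \<Rightarrow> (real \<Rightarrow> real^'m) \<Rightarrow> bool" where
  "feasible \<M> g U x T u \<longleftrightarrow>
     0 \<le> T \<and> u measurable_on {0..T} \<and> (\<forall>t\<in>{0..T}. u t \<in> U \<and> x t \<in> \<M>) \<and>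
     (\<lambda>s. \<Sum>i\<in>UNIV. u s $ i *\<^sub>R g i (x s)) integrable_on {0..T} \<and>
     (\<forall>t\<in>{0..T}. x t = x 0 + integral {0..t} (\<lambda>s. \<Sum>i\<in>UNIV. u s $ i *\<^sub>R g i (x s)))"

definition arclength :: "(real \<Rightarrow> real^'n) \<Rightarrow> real \<Rightarrow> real" where
  "arclength x T = integral {0..T} (\<lambda>t. norm (vector_derivative x (at t within {0..T})))"

text \<open>Sub-Riemannian distance (infimum over feasible trajectories; +\<infinity> if none).\<close>
definition sr_dist ::
  "(real^'n) set \<Rightarrow> ('m::finite \<Rightarrow> real^'n \<Rightarrow> real^'n) \<Rightarrow> (real^'m) set \<Rightarrow>
   real^'n \<Rightarrow> real^'n \<Rightarrow> ereal" where
  "sr_dist \<M> g U p q =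
     (INF xTu \<in> {(x, T, u). feasible \<M> g U x T u \<and> x 0 = p \<and> x T = q}.
        ereal (arclength (fst xTu) (fst (snd xTu))))"

definition sr_ball ::
  "(real^'n) set \<Rightarrow> ('m::finite \<Rightarrow> real^'n \<Rightarrow> real^'n) \<Rightarrow> (real^'m) set \<Rightarrow>
   real^'n \<Rightarrow> real \<Rightarrow> (real^'n) set" where
  "sr_ball \<M> g U p r = {q \<in> \<M>. sr_dist \<M> g U p q \<le> ereal r}"

end

theory Submission
  imports Defs
begin

definition Qd :: "(real \<Rightarrow> 'a::real_normed_vector) \<Rightarrow> real \<Rightarrow> real \<Rightarrow> 'a" where
  "Qd f t h = (1/h) *\<^sub>R (f (t+h) - f t)"

lemma vd_iff_quot:
  fixes f :: "real \<Rightarrow> 'a::real_normed_vector"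
  shows "(f has_vector_derivative v) (at t) \<longleftrightarrow> ((\<lambda>h. Qd f t h) \<midarrow>0\<rightarrow> v)"
proof -
  have eq: "norm (f (t + h) - f t - h *\<^sub>R v) / \<bar>h\<bar> = norm (Qd f t h - v)" if "h \<noteq> 0" for h
  proof -
    have "Qd f t h - v = (1/h) *\<^sub>R (f (t + h) - f t - h *\<^sub>R v)"
      using that by (simp add: Qd_def algebra_simps)
    then show ?thesis using that by (simp add: divide_inverse)
  qed
  have "(f has_vector_derivative v) (at t) \<longleftrightarrow> ((\<lambda>h. norm (f (t + h) - f t - h *\<^sub>R v) / norm h) \<midarrow>0\<rightarrow> 0)"
    unfolding has_vector_derivative_def has_derivative_at by (simp add: bounded_linear_scaleR_left)
  also have "\<dots> \<longleftrightarrow> ((\<lambda>h. norm (Qd f t h - v)) \<midarrow>0\<rightarrow> 0)"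
    apply (rule tendsto_cong)
    apply (rule eventually_at_filter[THEN iffD2])
    apply (rule always_eventually)
    using eq by simp
  also have "\<dots> \<longleftrightarrow> ((\<lambda>h. Qd f t h) \<midarrow>0\<rightarrow> v)"
    by (simp add: tendsto_norm_zero_iff LIM_zero_iff)
  finally show ?thesis .
qed

definition Cau :: "(real \<Rightarrow> 'a::real_normed_vector) \<Rightarrow> real \<Rightarrow> bool" where
  "Cau f t \<longleftrightarrow> (\<forall>k::nat. \<exists>j::nat. \<forall>r s. r \<noteq> 0 \<longrightarrow> s \<noteq> 0 \<longrightarrow> \<bar>r\<bar> < 1/Suc j \<longrightarrow> \<bar>s\<bar> < 1/Suc j
      \<longrightarrow> norm (Qd f t r - Qd f t s) \<le> 1/Suc k)"

lemma diff_iff_Cau: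
  fixes f :: "real \<Rightarrow> 'a::banach"
  shows "(\<exists>v. (f has_vector_derivative v) (at t)) \<longleftrightarrow> Cau f t"
proof
  assume "\<exists>v. (f has_vector_derivative v) (at t)"
  then obtain v where lim: "(\<lambda>h. Qd f t h) \<midarrow>0\<rightarrow> v" using vd_iff_quot by blast
  show "Cau f t" unfolding Cau_def
  proof
    fix k :: nat
    have "(0::real) < 1/(2*Suc k)" by simp
    then obtain d where d: "d > 0" "\<And>x. x \<noteq> 0 \<Longrightarrow> norm x < d \<Longrightarrow> norm (Qd f t x - v) < 1/(2*Suc k)"
      using lim unfolding LIM_eq by (metis diff_zero)
    obtain j :: nat where j: "inverse (real (Suc j)) < d" using d(1) reals_Archimedean by blast
    show "\<exists>j::nat. \<forall>r s. r \<noteq> 0 \<longrightarrow> s \<noteq> 0 \<longrightarrow> \<bar>r\<bar> < 1/Suc j \<longrightarrow> \<bar>s\<bar> < 1/Suc j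
      \<longrightarrow> norm (Qd f t r - Qd f t s) \<le> 1/Suc k"
    proof (intro exI allI impI)
      fix r s :: real assume rs: "r \<noteq> 0" "s \<noteq> 0" "\<bar>r\<bar> < 1/Suc j" "\<bar>s\<bar> < 1/Suc j"
      have "norm (Qd f t r - v) < 1/(2*Suc k)" "norm (Qd f t s - v) < 1/(2*Suc k)"
        using d(2)[of r] d(2)[of s] rs j by (auto simp: divide_inverse)
      moreover have "norm (Qd f t r - Qd f t s) \<le> norm (Qd f t r - v) + norm (Qd f t s - v)"
        using norm_triangle_ineq4[of "Qd f t r - v" "Qd f t s - v"] by simp
      ultimately have "norm (Qd f t r - Qd f t s) < 1/(2*Suc k) + 1/(2*Suc k)"
        by linarith
      moreover have "1/(2*Suc k) + 1/(2*Suc k) = 1/(Suc k)" by (simp add: field_simps)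
      ultimately show "norm (Qd f t r - Qd f t s) \<le> 1/Suc k" by simp
    qed
  qed
next
  assume C: "Cau f t"
  define a where "a n = Qd f t (inverse (real (Suc n)))" for n
  have "Cauchy a"
  proof (rule metric_CauchyI)
    fix e :: real assume "0 < e"
    then obtain k :: nat where k: "inverse (real (Suc k)) < e" using reals_Archimedean by blast
    obtain j where j: "\<And>r s. r \<noteq> 0 \<Longrightarrow> s \<noteq> 0 \<Longrightarrow> \<bar>r\<bar> < 1/Suc j \<Longrightarrow> \<bar>s\<bar> < 1/Suc j
      \<Longrightarrow> norm (Qd f t r - Qd f t s) \<le> 1/Suc k"
      using C unfolding Cau_def by blast
    show "\<exists>M. \<forall>m\<ge>M. \<forall>n\<ge>M. dist (a m) (a n) < e"
    proof (intro exI allI impI)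
      fix m n assume "Suc j \<le> m" "Suc j \<le> n"
      then have "inverse (real (Suc m)) < 1/Suc j" "inverse (real (Suc n)) < 1/Suc j"
        by (auto simp: divide_inverse)
      then have "norm (a m - a n) \<le> 1/Suc k" unfolding a_def by (intro j) auto
      then show "dist (a m) (a n) < e" using k by (simp add: dist_norm divide_inverse)
    qed
  qed
  then obtain v where av: "a \<longlonglongrightarrow> v" using Cauchy_convergent_iff convergent_def by blast
  have "(\<lambda>h. Qd f t h) \<midarrow>0\<rightarrow> v"
    unfolding LIM_eq
  proof (intro allI impI)
    fix e :: real assume "0 < e"
    then obtain k :: nat where k: "inverse (real (Suc k)) < e" using reals_Archimedean by blast
    obtain j where j: "\<And>r s. r \<noteq> 0 \<Longrightarrow> s \<noteq> 0 \<Longrightarrow> \<bar>r\<bar> < 1/Suc j \<Longrightarrow> \<bar>s\<bar> < 1/Suc j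
      \<Longrightarrow> norm (Qd f t r - Qd f t s) \<le> 1/Suc k"
      using C unfolding Cau_def by blast
    show "\<exists>s>0. \<forall>x. x \<noteq> 0 \<and> norm (x - 0) < s \<longrightarrow> norm (Qd f t x - v) < e"
    proof (intro exI conjI allI impI)
      show "(0::real) < 1/Suc j" by simp
      fix x :: real assume x: "x \<noteq> 0 \<and> norm (x - 0) < 1/Suc j"
      have lim2: "(\<lambda>n. norm (Qd f t x - a n)) \<longlonglongrightarrow> norm (Qd f t x - v)"
        by (intro tendsto_intros av)
      have "\<forall>n\<ge>Suc j. norm (Qd f t x - a n) \<le> 1/Suc k"
      proof (intro allI impI)
        fix n assume "Suc j \<le> n"
        then have "inverse (real (Suc n)) < 1/Suc j" by (auto simp: divide_inverse)
        then show "norm (Qd f t x - a n) \<le> 1/Suc k" unfolding a_def using x by (intro j) auto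
      qed
      then have "norm (Qd f t x - v) \<le> 1/Suc k"
        using LIMSEQ_le_const2[OF lim2] by blast
      then show "norm (Qd f t x - v) < e" using k by (simp add: divide_inverse)
    qed
  qed
  then show "\<exists>v. (f has_vector_derivative v) (at t)" using vd_iff_quot by blast
qed

lemma Cau_set_lebesgue:
  fixes f :: "real \<Rightarrow> 'a::real_normed_vector"
  assumes cont: "continuous_on UNIV f"
  shows "{t. Cau f t} \<in> sets lebesgue"
proof -
  define E where "E k j = {t. \<forall>r s. r \<noteq> 0 \<longrightarrow> s \<noteq> 0 \<longrightarrow> \<bar>r\<bar> < 1/Suc j \<longrightarrow> \<bar>s\<bar> < 1/Suc j
      \<longrightarrow> norm (Qd f t r - Qd f t s) \<le> 1/Suc k}" for k j :: nat
  have cQ: "continuous_on UNIV (\<lambda>t. Qd f t r)" for r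
    unfolding Qd_def by (intro continuous_intros continuous_on_compose2[OF cont]) auto
  have "closed (E k j)" for k j
    unfolding E_def
  proof (intro closed_Collect_all)
    fix r s
    show "closed {t. r \<noteq> 0 \<longrightarrow> s \<noteq> 0 \<longrightarrow> \<bar>r\<bar> < 1/Suc j \<longrightarrow> \<bar>s\<bar> < 1/Suc j
      \<longrightarrow> norm (Qd f t r - Qd f t s) \<le> 1/Suc k}"
    proof (cases "r \<noteq> 0 \<and> s \<noteq> 0 \<and> \<bar>r\<bar> < 1/Suc j \<and> \<bar>s\<bar> < 1/Suc j")
      case True
      have "closed {t. norm (Qd f t r - Qd f t s) \<le> 1/Suc k}"
        by (intro closed_Collect_le continuous_intros cQ)
      moreover have "{t. r \<noteq> 0 \<longrightarrow> s \<noteq> 0 \<longrightarrow> \<bar>r\<bar> < 1/Suc j \<longrightarrow> \<bar>s\<bar> < 1/Suc j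
      \<longrightarrow> norm (Qd f t r - Qd f t s) \<le> 1/Suc k} = {t. norm (Qd f t r - Qd f t s) \<le> 1/Suc k}"
        using True by blast
      ultimately show ?thesis by simp
    next
      case False
      then have "{t. r \<noteq> 0 \<longrightarrow> s \<noteq> 0 \<longrightarrow> \<bar>r\<bar> < 1/Suc j \<longrightarrow> \<bar>s\<bar> < 1/Suc j
      \<longrightarrow> norm (Qd f t r - Qd f t s) \<le> 1/Suc k} = UNIV" by blast
      then show ?thesis by simp
    qed
  qed
  then have "E k j \<in> sets lebesgue" for k j by (metis borel_closed sets_completionI_sets sets_lborel)
  then have "(\<Inter>k. \<Union>j. E k j) \<in> sets lebesgue"
    by (intro sets.countable_INT sets.countable_UN) auto
  moreover have "{t. Cau f t} = (\<Inter>k. \<Union>j. E k j)"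
    unfolding Cau_def E_def by blast
  ultimately show ?thesis by simp
qed
lemma vd_nodiff:
  assumes "\<not> (\<exists>v. (f has_vector_derivative v) net)"
  shows "vector_derivative f net = (SOME v. False)"
  using assms unfolding vector_derivative_def by simp

lemma vd_measurable:
  fixes f :: "real \<Rightarrow> 'a::euclidean_space"
  assumes cont: "continuous_on UNIV f"
  shows "(\<lambda>t. vector_derivative f (at t)) measurable_on UNIV"
proof -
  define D where "D = {t. Cau f t}"
  define c0 :: 'a where "c0 = (SOME v. False)"
  have D: "D \<in> sets lebesgue" unfolding D_def by (rule Cau_set_lebesgue[OF cont])
  define kn where "kn n t = (if t \<in> D then Qd f t (inverse (real (Suc n))) else c0)" for n t
  have cQ: "continuous_on UNIV (\<lambda>t. Qd f t r)" for r
    unfolding Qd_def by (intro continuous_intros continuous_on_compose2[OF cont]) auto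
  have "kn n measurable_on UNIV" for n
  proof -
    have "(\<lambda>t. if t \<in> D then Qd f t (inverse (real (Suc n))) - c0 else 0) measurable_on UNIV"
      by (intro measurable_on_restrict D continuous_imp_measurable_on continuous_intros cQ)
    then have "(\<lambda>t. (if t \<in> D then Qd f t (inverse (real (Suc n))) - c0 else 0) + c0) measurable_on UNIV"
      by (intro measurable_on_add) (auto simp: measurable_on_const_UNIV)
    moreover have "(\<lambda>t. (if t \<in> D then Qd f t (inverse (real (Suc n))) - c0 else 0) + c0) = kn n"
      by (auto simp: kn_def fun_eq_iff)
    ultimately show ?thesis by simp
  qed
  moreover have lim: "(\<lambda>n. kn n t) \<longlonglongrightarrow> vector_derivative f (at t)" for t
  proof (cases "t \<in> D")
    case True
    then obtain v where v: "(f has_vector_derivative v) (at t)"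
      using diff_iff_Cau D_def by blast
    then have vd: "vector_derivative f (at t) = v" by (rule vector_derivative_at)
    have "(\<lambda>h. Qd f t h) \<midarrow>0\<rightarrow> v" using v vd_iff_quot by blast
    then have all: "\<forall>S. (\<forall>n. S n \<noteq> 0) \<and> S \<longlonglongrightarrow> 0 \<longrightarrow> (\<lambda>n. Qd f t (S n)) \<longlonglongrightarrow> v"
      by (simp only: LIMSEQ_SEQ_conv)
    have "(\<lambda>n. inverse (real (Suc n))) \<longlonglongrightarrow> (0::real)" by (rule LIMSEQ_inverse_real_of_nat)
    then have "(\<lambda>n. Qd f t (inverse (real (Suc n)))) \<longlonglongrightarrow> v"
      using all[rule_format, of "\<lambda>n. inverse (real (Suc n))"] by simp
    then show ?thesis using True vd by (simp add: kn_def)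
  next
    case False
    then have "\<not> (\<exists>v. (f has_vector_derivative v) (at t))"
      using diff_iff_Cau[of f t] by (simp add: D_def)
    then have "vector_derivative f (at t) = c0"
      unfolding c0_def by (rule vd_nodiff)
    then show ?thesis using False by (simp add: kn_def)
  qed
  ultimately show ?thesis
    using measurable_on_limit[of kn UNIV "{}" "\<lambda>t. vector_derivative f (at t)"] by blast
qed

definition fld :: "('m::finite \<Rightarrow> real^'n \<Rightarrow> real^'n) \<Rightarrow> (real \<Rightarrow> real^'m) \<Rightarrow> (real \<Rightarrow> real^'n) \<Rightarrow> real \<Rightarrow> real^'n" where
  "fld g u x = (\<lambda>s. \<Sum>i\<in>UNIV. u s $ i *\<^sub>R g i (x s))"

lemma feasible_alt: "feasible \<M> g U x T u \<longleftrightarrow>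
     0 \<le> T \<and> u measurable_on {0..T} \<and> (\<forall>t\<in>{0..T}. u t \<in> U \<and> x t \<in> \<M>) \<and>
     fld g u x integrable_on {0..T} \<and>
     (\<forall>t\<in>{0..T}. x t = x 0 + integral {0..t} (fld g u x))"
  unfolding feasible_def fld_def by (rule refl)

lemma feasD:
  assumes "feasible \<M> g U x T u"
  shows "0 \<le> T" "u measurable_on {0..T}" "\<And>t. t\<in>{0..T} \<Longrightarrow> u t \<in> U"
    "\<And>t. t\<in>{0..T} \<Longrightarrow> x t \<in> \<M>" "fld g u x integrable_on {0..T}"
    "\<And>t. t\<in>{0..T} \<Longrightarrow> x t = x 0 + integral {0..t} (fld g u x)"
  using assms unfolding feasible_alt by blast+

lemma feas_cont:
  assumes "feasible \<M> g U x T u"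
  shows "continuous_on {0..T} x"
proof -
  note int = feasD(5)[OF assms] and eq = feasD(6)[OF assms]
  have "continuous_on {0..T} (\<lambda>t. x 0 + integral {0..t} (fld g u x))"
    by (intro continuous_intros indefinite_integral_continuous_1 int)
  then show ?thesis using eq by (metis (no_types, lifting) continuous_on_cong)
qed

lemma feas_diff:
  assumes "feasible \<M> g U x T u" "0 \<le> s" "s \<le> t" "t \<le> T"
  shows "x t - x s = integral {s..t} (fld g u x)"
proof -
  note int = feasD(5)[OF assms(1)] and eq = feasD(6)[OF assms(1)]
  have "fld g u x integrable_on {0..t}" by (rule integrable_subinterval_real[OF int]) (use assms in auto)
  then have "integral {0..s} (fld g u x) + integral {s..t} (fld g u x) = integral {0..t} (fld g u x)"
    by (rule Henstock_Kurzweil_Integration.integral_combine[OF assms(2) assms(3)])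
  then show ?thesis using eq[of s] eq[of t] assms by (auto simp: algebra_simps)
qed

lemma feas_bound:
  fixes g :: "'m::finite \<Rightarrow> real^'n \<Rightarrow> real^'n"
  assumes sys: "driftless_system \<M> g U" and feas: "feasible \<M> g U x T u"
  shows "\<exists>B\<ge>0. \<forall>s\<in>{0..T}. norm (fld g u x s) \<le> B"
proof -
  obtain S where S: "open S" "\<M> \<subseteq> S" "\<And>i. smooth_on S (g i)" and Ub: "bounded U"
    using sys unfolding driftless_system_def by blast
  have cg: "continuous_on S (g i)" for i
    using S(3)[of i] unfolding smooth_on_def by (metis Ck.simps(1))
  note xM = feasD(4)[OF feas] and uU = feasD(3)[OF feas]
  have cx: "continuous_on {0..T} x" by (rule feas_cont[OF feas])
  have "compact (g i ` x ` {0..T})" for i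
    by (intro compact_continuous_image continuous_on_subset[OF cg] cx compact_Icc) (use xM S(2) in auto)
  then have "bounded (\<Union>i\<in>UNIV. g i ` x ` {0..T})"
    by (intro bounded_UN) (auto intro: compact_imp_bounded)
  then obtain G where G: "G > 0" "\<And>y. y \<in> (\<Union>i\<in>UNIV. g i ` x ` {0..T}) \<Longrightarrow> norm y \<le> G"
    using bounded_pos by metis
  obtain K where K: "K > 0" "\<And>v. v \<in> U \<Longrightarrow> norm v \<le> K"
    using Ub bounded_pos by metis
  show ?thesis
  proof (intro exI conjI ballI)
    show "0 \<le> real CARD('m) * (K * G)" using G K by simp
    fix s assume s: "s \<in> {0..T}"
    have "norm (fld g u x s) \<le> (\<Sum>i\<in>UNIV. norm (u s $ i *\<^sub>R g i (x s)))"
      unfolding fld_def by (rule norm_sum)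
    also have "\<dots> \<le> (\<Sum>i\<in>(UNIV::'m set). K * G)"
    proof (rule sum_mono)
      fix i :: 'm
      have "\<bar>u s $ i\<bar> \<le> K" using component_le_norm_cart[of "u s" i] K(2)[OF uU[OF s]] by linarith
      moreover have "norm (g i (x s)) \<le> G" using G(2) s by blast
      ultimately show "norm (u s $ i *\<^sub>R g i (x s)) \<le> K * G"
        by (simp add: mult_mono)
    qed
    also have "\<dots> = real CARD('m) * (K * G)" by simp
    finally show "norm (fld g u x s) \<le> real CARD('m) * (K * G)" .
  qed
qed

lemma feas_lip:
  assumes sys: "driftless_system \<M> g U" and feas: "feasible \<M> g U x T u"
  shows "\<exists>B\<ge>0. \<forall>s\<in>{0..T}. \<forall>t\<in>{0..T}. norm (x t - x s) \<le> B * \<bar>t - s\<bar>"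
proof -
  obtain B where B: "B \<ge> 0" "\<And>s. s\<in>{0..T} \<Longrightarrow> norm (fld g u x s) \<le> B"
    using feas_bound[OF sys feas] by blast
  note int = feasD(5)[OF feas]
  have main: "norm (x t - x s) \<le> B * \<bar>t - s\<bar>" if "0 \<le> s" "s \<le> t" "t \<le> T" for s t
  proof -
    have "fld g u x integrable_on {s..t}" by (rule integrable_subinterval_real[OF int]) (use that in auto)
    then have "norm (integral {s..t} (fld g u x)) \<le> B * (t - s)"
      using has_integral_bound_real[of B "{}" "fld g u x" "integral {s..t} (fld g u x)" s t] B that by auto
    then show ?thesis using feas_diff[OF feas that] that by simp
  qed
  show ?thesis
  proof (intro exI conjI ballI)
    fix s t assume "s \<in> {0..T}" "t \<in> {0..T}"
    then show "norm (x t - x s) \<le> B * \<bar>t - s\<bar>"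
      using main[of s t] main[of t s] by (cases "s \<le> t") (auto simp: norm_minus_commute abs_minus_commute)
  qed (use B in auto)
qed

lemma vd_bound_lip:
  fixes f :: "real \<Rightarrow> 'a::real_normed_vector"
  assumes lip: "\<And>s t. norm (f t - f s) \<le> B * \<bar>t - s\<bar>" and B: "0 \<le> B"
  shows "norm (vector_derivative f (at t)) \<le> B + norm (SOME v::'a. False)"
proof (cases "\<exists>v. (f has_vector_derivative v) (at t)")
  case True
  then obtain v where v: "(f has_vector_derivative v) (at t)" by blast
  then have "(\<lambda>h. Qd f t h) \<midarrow>0\<rightarrow> v" using vd_iff_quot by blast
  then have "(\<lambda>h. norm (Qd f t h)) \<midarrow>0\<rightarrow> norm v" by (intro tendsto_intros)
  moreover have "\<forall>\<^sub>F h in at 0. norm (Qd f t h) \<le> B"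
  proof (rule eventually_at_filter[THEN iffD2], rule always_eventually, intro allI impI)
    fix h :: real assume "h \<noteq> 0"
    have "norm (Qd f t h) = norm (f (t + h) - f t) / \<bar>h\<bar>" by (simp add: Qd_def divide_inverse)
    also have "\<dots> \<le> B * \<bar>h\<bar> / \<bar>h\<bar>" using lip[of t "t+h"] by (intro divide_right_mono) (auto simp: norm_minus_commute)
    also have "\<dots> = B" using \<open>h \<noteq> 0\<close> by simp
    finally show "norm (Qd f t h) \<le> B" .
  qed
  ultimately have "norm v \<le> B" by (intro tendsto_upperbound) auto
  moreover have "vector_derivative f (at t) = v" by (rule vector_derivative_at[OF v])
  ultimately show ?thesis by (simp add: add_increasing2)
next
  case False
  then show ?thesis using vd_nodiff[OF False] B by simp
qed

lemma feas_integrable: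
  assumes sys: "driftless_system \<M> g U" and feas: "feasible \<M> g U x T u"
  shows "(\<lambda>t. norm (vector_derivative x (at t))) integrable_on {0..T}"
proof -
  note T = feasD(1)[OF feas]
  obtain B where B: "B \<ge> 0" "\<And>s t. s\<in>{0..T} \<Longrightarrow> t\<in>{0..T} \<Longrightarrow> norm (x t - x s) \<le> B * \<bar>t - s\<bar>"
    using feas_lip[OF sys feas] by blast
  define cl where "cl t = max 0 (min T t)" for t :: real
  define xc where "xc t = x (cl t)" for t
  have clI: "cl t \<in> {0..T}" for t using T by (auto simp: cl_def)
  have cl_lip: "\<bar>cl t - cl s\<bar> \<le> \<bar>t - s\<bar>" for s t by (auto simp: cl_def)
  have cxc: "continuous_on UNIV xc"
    unfolding xc_def cl_def
    by (intro continuous_on_compose2[OF feas_cont[OF feas]] continuous_intros) (use T in auto)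
  have lipc: "norm (xc t - xc s) \<le> B * \<bar>t - s\<bar>" for s t
  proof -
    have "norm (xc t - xc s) \<le> B * \<bar>cl t - cl s\<bar>" unfolding xc_def using B(2)[OF clI clI] .
    also have "\<dots> \<le> B * \<bar>t - s\<bar>" using cl_lip B(1) by (intro mult_left_mono) auto
    finally show ?thesis .
  qed
  have m1: "(\<lambda>t. norm (vector_derivative xc (at t))) measurable_on UNIV"
    using measurable_on_compose_continuous[OF vd_measurable[OF cxc], of norm]
    by (simp add: o_def continuous_on_norm_id)
  have "(\<lambda>t. if t \<in> {0..T} then norm (vector_derivative xc (at t)) else 0) measurable_on UNIV"
    by (intro measurable_on_restrict m1) auto
  then have "(\<lambda>t. norm (vector_derivative xc (at t))) measurable_on {0..T}"
    using measurable_on_UNIV[of "{0..T}" "\<lambda>t. norm (vector_derivative xc (at t))"] by simp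
  then have bm: "(\<lambda>t. norm (vector_derivative xc (at t))) \<in> borel_measurable (lebesgue_on {0..T})"
    by (simp add: measurable_on_iff_borel_measurable)
  have ic: "(\<lambda>t. B + norm (SOME v::real^'a. False)) integrable_on {0..T}"
    by (intro integrable_on_const) auto
  have i1: "(\<lambda>t. norm (vector_derivative xc (at t))) integrable_on {0..T}"
    by (rule measurable_bounded_by_integrable_imp_integrable[OF bm ic])
       (use vd_bound_lip[OF lipc B(1)] in auto)
  show ?thesis
  proof (rule integrable_spike[OF i1, of "{0,T}"])
    show "negligible {0, T}" by simp
    fix t assume t: "t \<in> {0..T} - {0, T}"
    have "(x has_vector_derivative v) (at t) \<longleftrightarrow> (xc has_vector_derivative v) (at t)" for v
    proof -
      have eq: "\<And>y. y \<in> {0<..<T} \<Longrightarrow> x y = xc y" by (auto simp: xc_def cl_def)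
      show ?thesis
        using has_vector_derivative_transform_within_open[of x v t "{0<..<T}" xc]
              has_vector_derivative_transform_within_open[of xc v t "{0<..<T}" x] eq t by auto
    qed
    then show "norm (vector_derivative x (at t)) = norm (vector_derivative xc (at t))"
      unfolding vector_derivative_def by simp
  qed
qed

lemma arclength_at:
  assumes T: "0 \<le> T"
  shows "arclength x T = integral {0..T} (\<lambda>t. norm (vector_derivative x (at t)))"
  unfolding arclength_def
proof (rule integral_spike[of "{0,T}"])
  show "negligible {0, T}" by simp
  fix t assume t: "t \<in> {0..T} - {0, T}"
  then have "at t within {0..T} = at t" by (intro at_within_interior) auto
  then show "norm (vector_derivative x (at t)) = norm (vector_derivative x (at t within {0..T}))" by simp
qed

lemma measurable_on_affine_real:
  fixes f :: "real \<Rightarrow> 'b::real_normed_vector"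
  assumes f: "f measurable_on S" and c: "c \<noteq> 0"
  shows "(\<lambda>t. f (c*t + a)) measurable_on {t. c*t + a \<in> S}"
proof -
  obtain N F where N: "negligible N" and cF: "\<And>n. continuous_on UNIV (F n)"
    and lim: "\<And>x. x \<notin> N \<Longrightarrow> (\<lambda>n. F n x) \<longlonglongrightarrow> (if x \<in> S then f x else 0)"
    using f unfolding measurable_on_def by blast
  define N' where "N' = (\<lambda>y. (y - a) / c) ` N"
  have "negligible N'"
    unfolding N'_def
  proof (rule negligible_differentiable_image_negligible[OF _ N])
    have "((\<lambda>y. (y - a) / c) has_derivative (\<lambda>h. h / c)) (at y)" for y
      using c by (auto intro!: derivative_eq_intros)
    then show "(\<lambda>y. (y - a) / c) differentiable_on N"
      unfolding differentiable_on_def differentiable_def by (blast intro: has_derivative_at_withinI)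
  qed simp
  show ?thesis
    unfolding measurable_on_def
  proof (intro exI conjI allI impI)
    show "negligible N'" by fact
    show "continuous_on UNIV (\<lambda>t. F n (c*t + a))" for n
      by (intro continuous_on_compose2[OF cF[of n]] continuous_intros) auto
    fix t assume t: "t \<notin> N'"
    have "c*t + a \<notin> N"
    proof
      assume "c*t + a \<in> N"
      then have "((c*t + a) - a)/c \<in> N'" unfolding N'_def by blast
      then show False using t c by simp
    qed
    from lim[OF this] show "(\<lambda>n. F n (c*t + a)) \<longlonglongrightarrow> (if t \<in> {t. c*t + a \<in> S} then f (c*t + a) else 0)"
      by simp
  qed
qed

lemma measurable_on_subset:
  fixes f :: "'a::euclidean_space \<Rightarrow> 'b::real_normed_vector"
  assumes f: "f measurable_on S" and sub: "T \<subseteq> S" and T: "T \<in> sets lebesgue"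
  shows "f measurable_on T"
proof -
  have "(\<lambda>x. if x \<in> S then f x else 0) measurable_on UNIV"
    using f measurable_on_UNIV by blast
  then have "(\<lambda>x. if x \<in> T then (if x \<in> S then f x else 0) else 0) measurable_on UNIV"
    by (rule measurable_on_restrict[OF _ T])
  moreover have "(\<lambda>x. if x \<in> T then (if x \<in> S then f x else 0) else 0) = (\<lambda>x. if x \<in> T then f x else 0)"
    using sub by (auto simp: fun_eq_iff)
  ultimately show ?thesis using measurable_on_UNIV[of T f] by simp
qed

lemma hvd_affine:
  fixes x :: "real \<Rightarrow> 'a::real_normed_vector"
  assumes "(x has_vector_derivative v) (at (c*t + a))"
  shows "((\<lambda>t. x (c*t + a)) has_vector_derivative (c *\<^sub>R v)) (at t)"
proof -
  have "((\<lambda>t. c*t + a) has_vector_derivative c) (at t)"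
    unfolding has_real_derivative_iff_has_vector_derivative[symmetric]
    by (auto intro!: derivative_eq_intros)
  from vector_diff_chain_at[OF this assms] show ?thesis by (simp add: o_def)
qed

lemma vd_shift:
  fixes x :: "real \<Rightarrow> 'a::real_normed_vector"
  shows "vector_derivative (\<lambda>t. x (t + c)) (at t) = vector_derivative x (at (t + c))"
proof (cases "\<exists>v. (x has_vector_derivative v) (at (t + c))")
  case True
  then obtain v where v: "(x has_vector_derivative v) (at (t + c))" by blast
  then have "((\<lambda>t. x (1*t + c)) has_vector_derivative (1 *\<^sub>R v)) (at t)"
    by (intro hvd_affine) simp
  then have "((\<lambda>t. x (t + c)) has_vector_derivative v) (at t)" by simp
  then show ?thesis using v by (simp add: vector_derivative_at)
next
  case False
  have "\<not> (\<exists>v. ((\<lambda>t. x (t + c)) has_vector_derivative v) (at t))"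
  proof
    assume "\<exists>v. ((\<lambda>t. x (t + c)) has_vector_derivative v) (at t)"
    then obtain v where v: "((\<lambda>t. x (t + c)) has_vector_derivative v) (at t)" by blast
    define y where "y = (\<lambda>t. x (t + c))"
    have "(y has_vector_derivative v) (at (1*(t + c) + -c))" using v by (simp add: y_def)
    from hvd_affine[OF this] have "(x has_vector_derivative v) (at (t + c))" by (simp add: y_def)
    then show False using False by blast
  qed
  then show ?thesis using False by (simp add: vd_nodiff)
qed

lemma vd_refl:
  fixes x :: "real \<Rightarrow> 'a::real_normed_vector"
  shows "norm (vector_derivative (\<lambda>t. x (T - t)) (at t)) = norm (vector_derivative x (at (T - t)))"
proof (cases "\<exists>v. (x has_vector_derivative v) (at (T - t))")
  case True
  then obtain v where v: "(x has_vector_derivative v) (at (T - t))" by blast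
  then have "((\<lambda>t. x ((-1)*t + T)) has_vector_derivative ((-1) *\<^sub>R v)) (at t)"
    by (intro hvd_affine) simp
  then have "((\<lambda>t. x (T - t)) has_vector_derivative (- v)) (at t)" by simp
  then show ?thesis using v by (simp add: vector_derivative_at)
next
  case False
  have "\<not> (\<exists>v. ((\<lambda>t. x (T - t)) has_vector_derivative v) (at t))"
  proof
    assume "\<exists>v. ((\<lambda>t. x (T - t)) has_vector_derivative v) (at t)"
    then obtain v where v: "((\<lambda>t. x (T - t)) has_vector_derivative v) (at t)" by blast
    define y where "y = (\<lambda>t. x (T - t))"
    have "(y has_vector_derivative v) (at ((-1)*(T - t) + T))" using v by (simp add: y_def)
    from hvd_affine[OF this] have "(x has_vector_derivative (- v)) (at (T - t))" by (simp add: y_def)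
    then show False using False by blast
  qed
  then show ?thesis using False by (simp add: vd_nodiff)
qed

lemma has_integral_refl_shift:
  fixes f :: "real \<Rightarrow> 'b::real_normed_vector"
  assumes "(f has_integral i) {T - t..T}"
  shows "((\<lambda>s. f (T - s)) has_integral i) {0..t}"
proof -
  have "((\<lambda>x. f (-x)) has_integral i) {-T..-(T-t)}"
    using has_integral_reflect_real[of f i "T-t" T] assms by blast
  from has_integral_shift_real_ivl[OF this, of "-T"]
  show ?thesis by simp
qed

lemma has_integral_shift0:
  fixes f :: "real \<Rightarrow> 'b::real_normed_vector"
  assumes "(f has_integral i) {a..b}"
  shows "((\<lambda>s. f (s + a)) has_integral i) {0..b - a}"
  using has_integral_shift_real_ivl[OF assms, of a] by simp

lemma arclength_nonneg: "0 \<le> arclength x T"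
  unfolding arclength_def
  by (cases "(\<lambda>t. norm (vector_derivative x (at t within {0..T}))) integrable_on {0..T}")
     (auto intro: integral_nonneg simp: not_integrable_integral)

lemma sr_dist_le:
  assumes "feasible \<M> g U z L v" "z 0 = p" "z L = q"
  shows "sr_dist \<M> g U p q \<le> ereal (arclength z L)"
  unfolding sr_dist_def
  by (rule INF_lower2[of "(z, L, v)"]) (use assms in auto)

lemma sr_dist_nonneg: "0 \<le> sr_dist \<M> g U p q"
  unfolding sr_dist_def by (rule INF_greatest) (auto simp: arclength_nonneg)

lemma reverse_traj:
  fixes g :: "'m::finite \<Rightarrow> real^'n \<Rightarrow> real^'n"
  assumes sys: "driftless_system \<M> g U" and feas: "feasible \<M> g U x T u"
  shows "feasible \<M> g U (\<lambda>t. x (T - t)) T (\<lambda>t. - u (T - t))"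
    and "arclength (\<lambda>t. x (T - t)) T = arclength x T"
proof -
  note T = feasD(1)[OF feas]
  have sym: "\<And>v. v \<in> U \<Longrightarrow> - v \<in> U" using sys unfolding driftless_system_def by blast
  have fz: "fld g (\<lambda>t. - u (T - t)) (\<lambda>t. x (T - t)) s = - fld g u x (T - s)" for s
    by (simp add: fld_def sum_negf)
  have feq: "fld g (\<lambda>t. - u (T - t)) (\<lambda>t. x (T - t)) = (\<lambda>s. - fld g u x (T - s))"
    by (rule ext) (rule fz)
  have meas: "(\<lambda>t. u ((-1)*t + T)) measurable_on {t. (-1)*t + T \<in> {0..T}}"
    by (rule measurable_on_affine_real[OF feasD(2)[OF feas]]) simp
  have "{t. (-1)*t + T \<in> {0..T}} = {0..T}" by auto
  then have "(\<lambda>t. u (T - t)) measurable_on {0..T}" using meas by simp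
  then have m2: "(\<lambda>t. - u (T - t)) measurable_on {0..T}" by (rule measurable_on_minus)
  have hi: "((\<lambda>s. - fld g u x (T - s)) has_integral (x (T - t) - x T)) {0..t}" if t: "t \<in> {0..T}" for t
  proof -
    have "fld g u x integrable_on {T - t..T}"
      by (rule integrable_subinterval_real[OF feasD(5)[OF feas]]) (use t in auto)
    then have "(fld g u x has_integral (x T - x (T - t))) {T - t..T}"
      using feas_diff[OF feas, of "T - t" T] t T by (simp add: has_integral_integral)
    from has_integral_neg[OF has_integral_refl_shift[OF this]]
    show ?thesis by simp
  qed
  show "feasible \<M> g U (\<lambda>t. x (T - t)) T (\<lambda>t. - u (T - t))"
    unfolding feasible_alt
  proof (intro conjI ballI)
    show "0 \<le> T" by fact
    show "(\<lambda>t. - u (T - t)) measurable_on {0..T}" by fact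
    fix t assume t: "t \<in> {0..T}"
    then show "- u (T - t) \<in> U" using sym feasD(3)[OF feas, of "T - t"] by auto
    show "x (T - t) \<in> \<M>" using t feasD(4)[OF feas, of "T - t"] by auto
  next
    show "fld g (\<lambda>t. - u (T - t)) (\<lambda>t. x (T - t)) integrable_on {0..T}"
      unfolding feq using hi[of T] T by (auto intro: has_integral_integrable)
  next
    fix t assume t: "t \<in> {0..T}"
    have "integral {0..t} (fld g (\<lambda>t. - u (T - t)) (\<lambda>t. x (T - t))) = x (T - t) - x T"
      unfolding feq by (rule integral_unique[OF hi[OF t]])
    then show "x (T - t) = x (T - 0) + integral {0..t} (fld g (\<lambda>t. - u (T - t)) (\<lambda>t. x (T - t)))"
      by simp
  qed
  have "arclength (\<lambda>t. x (T - t)) T = integral {0..T} (\<lambda>t. norm (vector_derivative (\<lambda>t. x (T - t)) (at t)))"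
    by (rule arclength_at[OF T])
  also have "\<dots> = integral {0..T} (\<lambda>t. norm (vector_derivative x (at (T - t))))"
    by (simp add: vd_refl)
  also have "\<dots> = integral {0..T} (\<lambda>t. norm (vector_derivative x (at t)))"
  proof -
    have "((\<lambda>t. norm (vector_derivative x (at t))) has_integral integral {0..T} (\<lambda>t. norm (vector_derivative x (at t)))) {T - T..T}"
      using feas_integrable[OF sys feas] by (simp add: has_integral_integral)
    from has_integral_refl_shift[OF this] show ?thesis by (simp add: integral_unique)
  qed
  also have "\<dots> = arclength x T" by (rule arclength_at[OF T, symmetric])
  finally show "arclength (\<lambda>t. x (T - t)) T = arclength x T" .
qed

lemma sr_dist_sym_le:
  fixes g :: "'m::finite \<Rightarrow> real^'n \<Rightarrow> real^'n"
  assumes sys: "driftless_system \<M> g U"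
  shows "sr_dist \<M> g U p q \<le> sr_dist \<M> g U q p"
  unfolding sr_dist_def[of \<M> g U q p]
proof (rule INF_greatest)
  fix xTu assume "xTu \<in> {(x, T, u). feasible \<M> g U x T u \<and> x 0 = q \<and> x T = p}"
  then obtain x T u where xTu: "xTu = (x, T, u)" and feas: "feasible \<M> g U x T u" and x0: "x 0 = q" and xT: "x T = p"
    by blast
  have "sr_dist \<M> g U p q \<le> ereal (arclength (\<lambda>t. x (T - t)) T)"
    by (rule sr_dist_le[OF reverse_traj(1)[OF sys feas]]) (use x0 xT in auto)
  then show "sr_dist \<M> g U p q \<le> ereal (arclength (fst xTu) (fst (snd xTu)))"
    using reverse_traj(2)[OF sys feas] xTu by simp
qed

lemma sr_dist_sym:
  fixes g :: "'m::finite \<Rightarrow> real^'n \<Rightarrow> real^'n"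
  assumes sys: "driftless_system \<M> g U"
  shows "sr_dist \<M> g U p q = sr_dist \<M> g U q p"
  using sr_dist_sym_le[OF sys, of p q] sr_dist_sym_le[OF sys, of q p] by simp

lemma concat_traj:
  fixes g :: "'m::finite \<Rightarrow> real^'n \<Rightarrow> real^'n"
  assumes sys: "driftless_system \<M> g U" and f1: "feasible \<M> g U x1 T1 u1"
    and f2: "feasible \<M> g U x2 T2 u2" and j: "x1 T1 = x2 0"
  defines "z \<equiv> \<lambda>t. if t \<le> T1 then x1 t else x2 (t - T1)"
    and "w \<equiv> \<lambda>t. if t \<le> T1 then u1 t else u2 (t - T1)"
  shows "feasible \<M> g U z (T1 + T2) w"
    and "arclength z (T1 + T2) = arclength x1 T1 + arclength x2 T2"
proof -
  note T1 = feasD(1)[OF f1] and T2 = feasD(1)[OF f2]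
  have Fz1: "fld g w z s = fld g u1 x1 s" if "s \<le> T1" for s
    using that by (simp add: fld_def z_def w_def)
  have Fz2: "fld g w z s = fld g u2 x2 (s - T1)" if "\<not> s \<le> T1" for s
    using that by (simp add: fld_def z_def w_def)
  have hi1: "(fld g w z has_integral (x1 t - x1 0)) {0..t}" if t: "0 \<le> t" "t \<le> T1" for t
  proof -
    have "fld g u1 x1 integrable_on {0..t}"
      by (rule integrable_subinterval_real[OF feasD(5)[OF f1]]) (use t in auto)
    then have hh: "(fld g u1 x1 has_integral (x1 t - x1 0)) {0..t}"
      using feas_diff[OF f1, of 0 t] t by (simp add: has_integral_integral)
    show ?thesis
      by (rule has_integral_spike_finite[OF _ _ hh, of "{}"]) (use t Fz1 in auto)
  qed
  have hi2: "(fld g w z has_integral (x2 (t - T1) - x2 0)) {T1..t}" if t: "T1 \<le> t" "t \<le> T1 + T2" for t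
  proof -
    have "fld g u2 x2 integrable_on {0..t - T1}"
      by (rule integrable_subinterval_real[OF feasD(5)[OF f2]]) (use t in auto)
    then have "(fld g u2 x2 has_integral (x2 (t - T1) - x2 0)) {0..t - T1}"
      using feas_diff[OF f2, of 0 "t - T1"] t by (simp add: has_integral_integral)
    from has_integral_shift_real_ivl[OF this, of "-T1"]
    have hh: "((\<lambda>s. fld g u2 x2 (s - T1)) has_integral (x2 (t - T1) - x2 0)) {T1..t}" by simp
    show ?thesis
      by (rule has_integral_spike_finite[OF _ _ hh, of "{T1}"]) (use t Fz2 in auto)
  qed
  have hi: "(fld g w z has_integral (z t - z 0)) {0..t}" if t: "0 \<le> t" "t \<le> T1 + T2" for t
  proof (cases "t \<le> T1")
    case True
    then show ?thesis using hi1[of t] t T1 by (simp add: z_def)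
  next
    case False
    have "(fld g w z has_integral ((x1 T1 - x1 0) + (x2 (t - T1) - x2 0))) {0..t}"
      by (rule has_integral_combine[of 0 T1 t]) (use False T1 t hi1[of T1] hi2[of t] in auto)
    then show ?thesis using False T1 j by (simp add: z_def)
  qed
  have meas: "w measurable_on {0..T1 + T2}"
  proof -
    have m1: "(\<lambda>t. if t \<in> {0..T1} then u1 t else 0) measurable_on UNIV"
      by (rule measurable_on_UNIV[THEN iffD2, OF feasD(2)[OF f1]])
    have "(\<lambda>t. u2 (1*t + -T1)) measurable_on {t. 1*t + -T1 \<in> {0..T2}}"
      by (rule measurable_on_affine_real[OF feasD(2)[OF f2]]) simp
    moreover have "{t. 1*t + -T1 \<in> {0..T2}} = {T1..T1+T2}" by auto
    ultimately have "(\<lambda>t. u2 (t - T1)) measurable_on {T1..T1+T2}" by simp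
    then have m2: "(\<lambda>t. if t \<in> {T1..T1+T2} then u2 (t - T1) else 0) measurable_on UNIV"
      by (rule measurable_on_UNIV[THEN iffD2])
    have "(\<lambda>t. (if t \<in> {0..T1} then u1 t else 0) + (if t \<in> {T1..T1+T2} then u2 (t - T1) else 0)) measurable_on UNIV"
      by (rule measurable_on_add[OF m1 m2])
    then have "(\<lambda>t. (if t \<in> {0..T1} then u1 t else 0) + (if t \<in> {T1..T1+T2} then u2 (t - T1) else 0)) measurable_on {0..T1+T2}"
    proof (rule measurable_on_subset)
      have "cbox 0 (T1+T2) \<in> lmeasurable" by (rule lmeasurable_cbox)
      then show "{0..T1+T2} \<in> sets lebesgue" by (simp add: fmeasurableD)
    qed simp
    then show ?thesis
    proof (rule measurable_on_spike[of _ _ "{T1}"])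
      show "negligible {T1}" by simp
      fix t assume t: "t \<in> {0..T1 + T2} - {T1}"
      show "w t = (if t \<in> {0..T1} then u1 t else 0) + (if t \<in> {T1..T1+T2} then u2 (t - T1) else 0)"
      proof (cases "t \<le> T1")
        case True then show ?thesis using t by (simp add: w_def)
      next
        case False then show ?thesis using t by (simp add: w_def)
      qed
    qed
  qed
  show feas: "feasible \<M> g U z (T1 + T2) w"
    unfolding feasible_alt
  proof (intro conjI ballI)
    show "0 \<le> T1 + T2" using T1 T2 by simp
    show "w measurable_on {0..T1 + T2}" by fact
    fix t assume t: "t \<in> {0..T1 + T2}"
    show "w t \<in> U" using t feasD(3)[OF f1, of t] feasD(3)[OF f2, of "t - T1"] by (auto simp: w_def)
    show "z t \<in> \<M>" using t feasD(4)[OF f1, of t] feasD(4)[OF f2, of "t - T1"] by (auto simp: z_def)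
  next
    have "(fld g w z has_integral (z (T1 + T2) - z 0)) {0..T1 + T2}" using hi[of "T1 + T2"] T1 T2 by simp
    then show "fld g w z integrable_on {0..T1 + T2}" by (rule has_integral_integrable)
  next
    fix t assume t: "t \<in> {0..T1 + T2}"
    have "integral {0..t} (fld g w z) = z t - z 0" using t by (intro integral_unique hi) auto
    then show "z t = z 0 + integral {0..t} (fld g w z)" by simp
  qed
  let ?h = "\<lambda>t. norm (vector_derivative z (at t))"
  have intz: "?h integrable_on {0..T1 + T2}" by (rule feas_integrable[OF sys feas])
  have "arclength z (T1 + T2) = integral {0..T1 + T2} ?h"
    by (rule arclength_at) (use T1 T2 in simp)
  also have "\<dots> = integral {0..T1} ?h + integral {T1..T1 + T2} ?h"
    by (rule Henstock_Kurzweil_Integration.integral_combine[symmetric]) (use T1 T2 intz in auto)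
  also have "integral {0..T1} ?h = arclength x1 T1"
  proof -
    have "integral {0..T1} ?h = integral {0..T1} (\<lambda>t. norm (vector_derivative x1 (at t)))"
    proof (rule integral_spike[of "{0, T1}"])
      show "negligible {0, T1}" by simp
      fix t assume t: "t \<in> {0..T1} - {0, T1}"
      have "(x1 has_vector_derivative v) (at t) \<longleftrightarrow> (z has_vector_derivative v) (at t)" for v
      proof -
        have eq: "\<And>y. y \<in> {..<T1} \<Longrightarrow> x1 y = z y" by (auto simp: z_def)
        show ?thesis
          using has_vector_derivative_transform_within_open[of x1 v t "{..<T1}" z]
                has_vector_derivative_transform_within_open[of z v t "{..<T1}" x1] eq t by auto
      qed
      then show "norm (vector_derivative x1 (at t)) = norm (vector_derivative z (at t))"
        unfolding vector_derivative_def by simp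
    qed
    also have "\<dots> = arclength x1 T1" by (rule arclength_at[OF T1, symmetric])
    finally show ?thesis .
  qed
  also have "integral {T1..T1 + T2} ?h = arclength x2 T2"
  proof -
    have "integral {T1..T1 + T2} ?h = integral {T1..T1 + T2} (\<lambda>t. norm (vector_derivative x2 (at (t + - T1))))"
    proof (rule integral_spike[of "{T1, T1 + T2}"])
      show "negligible {T1, T1 + T2}" by simp
      fix t assume t: "t \<in> {T1..T1 + T2} - {T1, T1 + T2}"
      have "(z has_vector_derivative v) (at t) \<longleftrightarrow> ((\<lambda>t. x2 (t + - T1)) has_vector_derivative v) (at t)" for v
      proof -
        have eq: "\<And>y. y \<in> {T1<..} \<Longrightarrow> z y = x2 (y + - T1)" by (auto simp: z_def)
        show ?thesis
          using has_vector_derivative_transform_within_open[of z v t "{T1<..}" "\<lambda>t. x2 (t + - T1)"]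
                has_vector_derivative_transform_within_open[of "\<lambda>t. x2 (t + - T1)" v t "{T1<..}" z] eq t by auto
      qed
      then have "vector_derivative z (at t) = vector_derivative (\<lambda>t. x2 (t + - T1)) (at t)"
        unfolding vector_derivative_def by simp
      then show "norm (vector_derivative x2 (at (t + - T1))) = norm (vector_derivative z (at t))"
        by (simp only: vd_shift)
    qed
    also have "\<dots> = integral {0..T2} (\<lambda>t. norm (vector_derivative x2 (at t)))"
      using integral_shift_real_ivl[of 0 "-T1" T2 "\<lambda>t. norm (vector_derivative x2 (at t))"]
      by (simp add: add.commute)
    also have "\<dots> = arclength x2 T2" by (rule arclength_at[OF T2, symmetric])
    finally show ?thesis .
  qed
  finally show "arclength z (T1 + T2) = arclength x1 T1 + arclength x2 T2" .
qed

lemma sr_dist_tri: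
  fixes g :: "'m::finite \<Rightarrow> real^'n \<Rightarrow> real^'n"
  assumes sys: "driftless_system \<M> g U"
  shows "sr_dist \<M> g U p r \<le> sr_dist \<M> g U p q + sr_dist \<M> g U q r"
proof -
  define A where "A = {(x, T, u). feasible \<M> g U x T u \<and> x 0 = p \<and> x T = q}"
  define B where "B = {(x, T, u). feasible \<M> g U x T u \<and> x 0 = q \<and> x T = r}"
  define len :: "(real \<Rightarrow> real^'n) \<times> real \<times> (real \<Rightarrow> real^'m) \<Rightarrow> ereal"
    where "len xTu = ereal (arclength (fst xTu) (fst (snd xTu)))" for xTu
  have dpq: "sr_dist \<M> g U p q = (INF a\<in>A. len a)" unfolding sr_dist_def A_def len_def ..
  have dqr: "sr_dist \<M> g U q r = (INF a\<in>B. len a)" unfolding sr_dist_def B_def len_def ..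
  have lnn: "0 \<le> len a" for a by (simp add: len_def arclength_nonneg)
  have key: "sr_dist \<M> g U p r \<le> len a + len b" if a: "a \<in> A" and b: "b \<in> B" for a b
  proof -
    obtain x1 T1 u1 where a1: "a = (x1, T1, u1)" and f1: "feasible \<M> g U x1 T1 u1" and p1: "x1 0 = p" and q1: "x1 T1 = q"
      using a unfolding A_def by blast
    obtain x2 T2 u2 where b2: "b = (x2, T2, u2)" and f2: "feasible \<M> g U x2 T2 u2" and q2: "x2 0 = q" and r2: "x2 T2 = r"
      using b unfolding B_def by blast
    define z where "z = (\<lambda>t. if t \<le> T1 then x1 t else x2 (t - T1))"
    define w where "w = (\<lambda>t. if t \<le> T1 then u1 t else u2 (t - T1))"
    have j: "x1 T1 = x2 0" using q1 q2 by simp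
    note fz = concat_traj(1)[OF sys f1 f2 j, folded z_def w_def]
    note az = concat_traj(2)[OF sys f1 f2 j, folded z_def w_def]
    have T1: "0 \<le> T1" and T2: "0 \<le> T2" using feasD(1)[OF f1] feasD(1)[OF f2] by auto
    have "z 0 = p" using T1 p1 by (simp add: z_def)
    moreover have "z (T1 + T2) = r"
    proof (cases "T2 = 0")
      case True then show ?thesis using j r2 by (simp add: z_def)
    next
      case False then show ?thesis using T2 r2 by (simp add: z_def)
    qed
    ultimately have "sr_dist \<M> g U p r \<le> ereal (arclength z (T1 + T2))"
      using sr_dist_le[OF fz] by blast
    also have "\<dots> = len a + len b" using az a1 b2 by (simp add: len_def)
    finally show ?thesis .
  qed
  show ?thesis
  proof (cases "A = {} \<or> B = {}")
    case True
    then have "sr_dist \<M> g U p q = \<infinity> \<or> sr_dist \<M> g U q r = \<infinity>" using dpq dqr by (auto simp: top_ereal_def)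
    then show ?thesis by auto
  next
    case False
    have step: "sr_dist \<M> g U p r \<le> len a + sr_dist \<M> g U q r" if a: "a \<in> A" for a
    proof -
      have "sr_dist \<M> g U p r \<le> (INF b\<in>B. len a + len b)"
        by (rule INF_greatest) (rule key[OF a])
      also have "\<dots> = len a + (INF b\<in>B. len b)"
        by (rule INF_ereal_add_right) (use False lnn in auto)
      finally show ?thesis using dqr by simp
    qed
    have "sr_dist \<M> g U p r \<le> (INF a\<in>A. len a + sr_dist \<M> g U q r)"
      by (rule INF_greatest) (rule step)
    also have "\<dots> = (INF a\<in>A. len a) + sr_dist \<M> g U q r"
      by (rule INF_ereal_add_left) (use False lnn sr_dist_nonneg[of \<M> g U q r] in auto)
    finally show ?thesis using dpq by simp
  qed
qed

lemma segment_bound: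
  fixes g :: "'m::finite \<Rightarrow> real^'n \<Rightarrow> real^'n"
  assumes sys: "driftless_system \<M> g U" and feas: "feasible \<M> g U x T u"
    and ab: "0 \<le> a" "a \<le> b" "b \<le> T"
  shows "sr_dist \<M> g U (x a) (x b) \<le> ereal (integral {a..b} (\<lambda>t. norm (vector_derivative x (at t))))"
proof -
  define z where "z = (\<lambda>s. x (s + a))"
  define w where "w = (\<lambda>s. u (s + a))"
  have fz: "fld g w z s = fld g u x (s + a)" for s by (simp add: fld_def z_def w_def)
  have feq: "fld g w z = (\<lambda>s. fld g u x (s + a))" by (rule ext) (rule fz)
  have hi: "(fld g w z has_integral (z t - z 0)) {0..t}" if t: "0 \<le> t" "t \<le> b - a" for t
  proof -
    have "fld g u x integrable_on {a..t + a}"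
      by (rule integrable_subinterval_real[OF feasD(5)[OF feas]]) (use t ab in auto)
    then have "(fld g u x has_integral (x (t + a) - x a)) {a..t + a}"
      using feas_diff[OF feas, of a "t + a"] t ab by (simp add: has_integral_integral)
    from has_integral_shift0[OF this] show ?thesis unfolding feq by (simp add: z_def)
  qed
  have meas: "w measurable_on {0..b - a}"
  proof -
    have "(\<lambda>t. u (1*t + a)) measurable_on {t. 1*t + a \<in> {0..T}}"
      by (rule measurable_on_affine_real[OF feasD(2)[OF feas]]) simp
    then have "(\<lambda>t. u (t + a)) measurable_on {t. t + a \<in> {0..T}}" by simp
    then show ?thesis unfolding w_def
    proof (rule measurable_on_subset)
      have "cbox 0 (b - a) \<in> lmeasurable" by (rule lmeasurable_cbox)
      then show "{0..b - a} \<in> sets lebesgue" by (simp add: fmeasurableD)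
      show "{0..b - a} \<subseteq> {t. t + a \<in> {0..T}}" using ab by auto
    qed
  qed
  have feasz: "feasible \<M> g U z (b - a) w"
    unfolding feasible_alt
  proof (intro conjI ballI)
    show "0 \<le> b - a" using ab by simp
    show "w measurable_on {0..b - a}" by fact
    fix t assume t: "t \<in> {0..b - a}"
    show "w t \<in> U" using t ab feasD(3)[OF feas, of "t + a"] by (simp add: w_def)
    show "z t \<in> \<M>" using t ab feasD(4)[OF feas, of "t + a"] by (simp add: z_def)
  next
    have "(fld g w z has_integral (z (b - a) - z 0)) {0..b - a}" using hi[of "b - a"] ab by simp
    then show "fld g w z integrable_on {0..b - a}" by (rule has_integral_integrable)
  next
    fix t assume t: "t \<in> {0..b - a}"
    have "integral {0..t} (fld g w z) = z t - z 0" using t by (intro integral_unique hi) auto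
    then show "z t = z 0 + integral {0..t} (fld g w z)" by simp
  qed
  have "sr_dist \<M> g U (x a) (x b) \<le> ereal (arclength z (b - a))"
    by (rule sr_dist_le[OF feasz]) (auto simp: z_def)
  also have "arclength z (b - a) = integral {0..b - a} (\<lambda>t. norm (vector_derivative z (at t)))"
    by (rule arclength_at) (use ab in simp)
  also have "\<dots> = integral {0..b - a} (\<lambda>t. norm (vector_derivative x (at (t + a))))"
    unfolding z_def by (simp only: vd_shift)
  also have "\<dots> = integral {a..b} (\<lambda>t. norm (vector_derivative x (at t)))"
    using integral_shift_real_ivl[of a a b "\<lambda>t. norm (vector_derivative x (at t))"] by simp
  finally show ?thesis .
qed

theorem lemma3:
  fixes \<M> :: "(real^'n) set" and g :: "'m::finite \<Rightarrow> real^'n \<Rightarrow> real^'n"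
    and U :: "(real^'m) set"
    and x :: "real \<Rightarrow> real^'n" and T :: real and u :: "real \<Rightarrow> real^'m"
    and M :: nat and \<tau> :: "nat \<Rightarrow> real" and \<rho> \<beta> \<alpha> :: real
    and y :: "nat \<Rightarrow> real^'n"
  assumes sys: "driftless_system \<M> g U"
    and feas: "feasible \<M> g U x T u"
    and M1: "1 \<le> M"
    and part0: "\<tau> 1 = 0" and partT: "\<tau> M = T"
    and partmono: "\<And>m. 1 \<le> m \<Longrightarrow> m < M \<Longrightarrow> \<tau> m < \<tau> (Suc m)"
    and rho: "0 < \<rho>" and beta: "0 < \<beta>" "\<beta> < 1" and alpha: "0 \<le> \<alpha>" "\<alpha> \<le> 1"
    and yM: "\<And>m. 1 \<le> m \<Longrightarrow> m \<le> M \<Longrightarrow> y m \<in> \<M>"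
    and a: "\<And>m. 1 \<le> m \<Longrightarrow> m \<le> M \<Longrightarrow> y m \<in> sr_ball \<M> g U (x (\<tau> m)) \<rho>"
    and b: "real (card {m \<in> {1..M}. y m \<in> sr_ball \<M> g U (x (\<tau> m)) (\<beta> * \<rho>)}) > (1 - \<alpha>) * real M"
  shows "(\<Sum>m\<in>{1..<M}. sr_dist \<M> g U (y m) (y (Suc m)))
           \<le> ereal (arclength x T + 2 * real M * \<rho> * (\<beta> + \<alpha> - \<alpha> * \<beta>))"
proof -
  define h where "h t = norm (vector_derivative x (at t))" for t
  define I where "I m = integral {\<tau> m..\<tau> (Suc m)} h" for m
  define G where "G = {m \<in> {1..M}. y m \<in> sr_ball \<M> g U (x (\<tau> m)) (\<beta> * \<rho>)}"
  define r where "r m = (if m \<in> G then \<beta> * \<rho> else \<rho>)" for m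
  note T = feasD(1)[OF feas]
  have hint: "h integrable_on {0..T}" unfolding h_def by (rule feas_integrable[OF sys feas])
  have mono: "\<tau> m \<le> \<tau> n" if "1 \<le> m" "m \<le> n" "n \<le> M" for m n
    using that
  proof (induction n)
    case 0 then show ?case by simp
  next
    case (Suc n)
    show ?case
    proof (cases "m = Suc n")
      case True then show ?thesis by simp
    next
      case False
      then have "m \<le> n" using Suc by simp
      then have "\<tau> m \<le> \<tau> n" using Suc by simp
      moreover have "\<tau> n < \<tau> (Suc n)" using partmono[of n] Suc \<open>m \<le> n\<close> by simp
      ultimately show ?thesis by simp
    qed
  qed
  have rng: "0 \<le> \<tau> m \<and> \<tau> m \<le> T" if "1 \<le> m" "m \<le> M" for m
    using mono[of 1 m] mono[of m M] that M1 part0 partT by simp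
  have sumI: "k \<le> M \<longrightarrow> (\<Sum>m\<in>{1..<k}. I m) = integral {\<tau> 1..\<tau> k} h" if k: "1 \<le> k" for k
    using k
  proof (induction k rule: dec_induct)
    case base then show ?case by simp
  next
    case (step n)
    show ?case
    proof
      assume n: "Suc n \<le> M"
      have "(\<Sum>m\<in>{1..<Suc n}. I m) = (\<Sum>m\<in>{1..<n}. I m) + I n"
        using step(1) by simp
      also have "\<dots> = integral {\<tau> 1..\<tau> n} h + integral {\<tau> n..\<tau> (Suc n)} h"
        using step n by (simp add: I_def)
      also have "\<dots> = integral {\<tau> 1..\<tau> (Suc n)} h"
      proof (rule Henstock_Kurzweil_Integration.integral_combine)
        show "\<tau> 1 \<le> \<tau> n" using mono[of 1 n] step n by simp
        show "\<tau> n \<le> \<tau> (Suc n)" using mono[of n "Suc n"] step n by simp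
        show "h integrable_on {\<tau> 1..\<tau> (Suc n)}"
          by (rule integrable_subinterval_real[OF hint]) (use rng[of 1] rng[of "Suc n"] n M1 in auto)
      qed
      finally show "(\<Sum>m\<in>{1..<Suc n}. I m) = integral {\<tau> 1..\<tau> (Suc n)} h" .
    qed
  qed
  have sumIM: "(\<Sum>m\<in>{1..<M}. I m) = arclength x T"
    using sumI[OF M1] part0 partT arclength_at[OF T, of x] by (simp add: h_def[abs_def])
  have rnn: "0 \<le> r m" for m using rho beta by (simp add: r_def)
  have dxy: "sr_dist \<M> g U (y m) (x (\<tau> m)) \<le> ereal (r m)" if m: "1 \<le> m" "m \<le> M" for m
  proof -
    have "sr_dist \<M> g U (x (\<tau> m)) (y m) \<le> ereal (r m)"
    proof (cases "m \<in> G")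
      case True then show ?thesis by (simp add: r_def G_def sr_ball_def)
    next
      case False then show ?thesis using a[OF m] by (simp add: r_def sr_ball_def)
    qed
    then show ?thesis using sr_dist_sym[OF sys] by metis
  qed
  have dxy': "sr_dist \<M> g U (x (\<tau> m)) (y m) \<le> ereal (r m)" if m: "1 \<le> m" "m \<le> M" for m
    using dxy[OF m] sr_dist_sym[OF sys] by metis
  have each: "sr_dist \<M> g U (y m) (y (Suc m)) \<le> ereal (r m + I m + r (Suc m))" if m: "m \<in> {1..<M}" for m
  proof -
    have seg: "sr_dist \<M> g U (x (\<tau> m)) (x (\<tau> (Suc m))) \<le> ereal (I m)"
      unfolding I_def h_def
      by (rule segment_bound[OF sys feas]) (use rng[of m] rng[of "Suc m"] mono[of m "Suc m"] m in auto)
    have "sr_dist \<M> g U (y m) (y (Suc m)) \<le> sr_dist \<M> g U (y m) (x (\<tau> m)) + sr_dist \<M> g U (x (\<tau> m)) (y (Suc m))"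
      by (rule sr_dist_tri[OF sys])
    also have "\<dots> \<le> sr_dist \<M> g U (y m) (x (\<tau> m)) + (sr_dist \<M> g U (x (\<tau> m)) (x (\<tau> (Suc m))) + sr_dist \<M> g U (x (\<tau> (Suc m))) (y (Suc m)))"
      by (intro add_left_mono sr_dist_tri[OF sys])
    also have "\<dots> \<le> ereal (r m) + (ereal (I m) + ereal (r (Suc m)))"
      by (intro add_mono dxy dxy' seg) (use m in auto)
    also have "\<dots> = ereal (r m + I m + r (Suc m))" by simp
    finally show ?thesis .
  qed
  have "(\<Sum>m\<in>{1..<M}. sr_dist \<M> g U (y m) (y (Suc m))) \<le> (\<Sum>m\<in>{1..<M}. ereal (r m + I m + r (Suc m)))"
    by (rule sum_mono) (rule each)
  also have "\<dots> = ereal (\<Sum>m\<in>{1..<M}. r m + I m + r (Suc m))" by simp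
  also have "(\<Sum>m\<in>{1..<M}. r m + I m + r (Suc m)) \<le> arclength x T + 2 * real M * \<rho> * (\<beta> + \<alpha> - \<alpha> * \<beta>)"
  proof -
    have s1: "(\<Sum>m\<in>{1..<M}. r m) \<le> (\<Sum>m\<in>{1..M}. r m)"
      by (rule sum_mono2) (auto simp: rnn)
    have "(\<Sum>m\<in>{1..<M}. r (Suc m)) = (\<Sum>m\<in>{Suc 1..<Suc M}. r m)"
      by (rule sum.shift_bounds_Suc_ivl[symmetric])
    also have "\<dots> \<le> (\<Sum>m\<in>{1..M}. r m)"
      by (rule sum_mono2) (auto simp: rnn)
    finally have s2: "(\<Sum>m\<in>{1..<M}. r (Suc m)) \<le> (\<Sum>m\<in>{1..M}. r m)" .
    have GM: "G \<subseteq> {1..M}" by (auto simp: G_def)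
    have "(\<Sum>m\<in>{1..M}. r m) = (\<Sum>m\<in>{1..M}. \<rho> - (if m \<in> G then (1 - \<beta>) * \<rho> else 0))"
      by (rule sum.cong) (auto simp: r_def algebra_simps)
    also have "\<dots> = real M * \<rho> - (\<Sum>m\<in>{1..M}. (if m \<in> G then (1 - \<beta>) * \<rho> else 0))"
      by (simp add: sum_subtractf)
    also have "(\<Sum>m\<in>{1..M}. (if m \<in> G then (1 - \<beta>) * \<rho> else 0)) = real (card G) * ((1 - \<beta>) * \<rho>)"
      using GM by (simp add: sum.If_cases Int_absorb1)
    finally have sr: "(\<Sum>m\<in>{1..M}. r m) = real M * \<rho> - real (card G) * ((1 - \<beta>) * \<rho>)" .
    have cG: "(1 - \<alpha>) * real M \<le> real (card G)" using b unfolding G_def by simp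
    have "(1 - \<alpha>) * real M * ((1 - \<beta>) * \<rho>) \<le> real (card G) * ((1 - \<beta>) * \<rho>)"
      by (rule mult_right_mono[OF cG]) (use beta rho in simp)
    then have s3: "(\<Sum>m\<in>{1..M}. r m) \<le> real M * \<rho> * (\<beta> + \<alpha> - \<alpha> * \<beta>)"
      unfolding sr by (simp add: algebra_simps)
    have "(\<Sum>m\<in>{1..<M}. r m + I m + r (Suc m)) = (\<Sum>m\<in>{1..<M}. r m) + (\<Sum>m\<in>{1..<M}. I m) + (\<Sum>m\<in>{1..<M}. r (Suc m))"
      by (simp add: sum.distrib)
    then show ?thesis using s1 s2 s3 sumIM by simp
  qed
  finally show ?thesis by simp
qed

end
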